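(* Let $G$ be a $k$-regular graph such that $\overline{G}$ is Helly, and let $T$ be a cotriangle in $G$. Then there are at least $k$ vertices of $G$ that are adjacent to $T$.
   Context: All graphs are finite and simple. A clique is a maximal set of pairwise adjacent vertices. A collection of sets has the Helly property if every subcollection whose members pairwise intersect has nonempty total intersection. A graph is Helly if its collection of cliques has the Helly property. A cotriangle in $G$ is an independent set of three vertices of $G$. A vertex $x$ of $G$ is adjacent to a cotriangle $T$ if $x$ is adjacent in $G$ to at least two vertices of $T$. *)

theory Defs
  imports Main
begin

definition simple_graph :: "'a set \<Rightarrow> ('a \<Rightarrow> 'a \<Rightarrow> bool) \<Rightarrow> bool" where
  "simple_graph V E \<longleftrightarrow> finite V \<and> (\<forall>x y. E x y \<longrightarrow> x \<in> V \<and> y \<in> V)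
     \<and> (\<forall>x y. E x y \<longrightarrow> E y x) \<and> (\<forall>x. \<not> E x x)"

definition neighbours :: "'a set \<Rightarrow> ('a \<Rightarrow> 'a \<Rightarrow> bool) \<Rightarrow> 'a \<Rightarrow> 'a set" where
  "neighbours V E x = {y \<in> V. E x y}"

definition regular :: "'a set \<Rightarrow> ('a \<Rightarrow> 'a \<Rightarrow> bool) \<Rightarrow> nat \<Rightarrow> bool" where
  "regular V E k \<longleftrightarrow> (\<forall>x\<in>V. card (neighbours V E x) = k)"

definition compl_edges :: "'a set \<Rightarrow> ('a \<Rightarrow> 'a \<Rightarrow> bool) \<Rightarrow> 'a \<Rightarrow> 'a \<Rightarrow> bool" where
  "compl_edges V E x y \<longleftrightarrow> x \<in> V \<and> y \<in> V \<and> x \<noteq> y \<and> \<not> E x y"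

definition complete_set :: "'a set \<Rightarrow> ('a \<Rightarrow> 'a \<Rightarrow> bool) \<Rightarrow> 'a set \<Rightarrow> bool" where
  "complete_set V E C \<longleftrightarrow> C \<subseteq> V \<and> (\<forall>x\<in>C. \<forall>y\<in>C. x \<noteq> y \<longrightarrow> E x y)"

definition is_clique :: "'a set \<Rightarrow> ('a \<Rightarrow> 'a \<Rightarrow> bool) \<Rightarrow> 'a set \<Rightarrow> bool" where
  "is_clique V E C \<longleftrightarrow> complete_set V E C \<and>
     (\<forall>D. complete_set V E D \<and> C \<subseteq> D \<longrightarrow> D = C)"

definition helly_family :: "'a set set \<Rightarrow> bool" where
  "helly_family \<F> \<longleftrightarrow> (\<forall>\<S> \<subseteq> \<F>. (\<forall>A\<in>\<S>. \<forall>B\<in>\<S>. A \<inter> B \<noteq> {}) \<longrightarrow> \<Inter>\<S> \<noteq> {})"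

definition helly_graph :: "'a set \<Rightarrow> ('a \<Rightarrow> 'a \<Rightarrow> bool) \<Rightarrow> bool" where
  "helly_graph V E \<longleftrightarrow> helly_family {C. is_clique V E C}"

definition cotriangle :: "'a set \<Rightarrow> ('a \<Rightarrow> 'a \<Rightarrow> bool) \<Rightarrow> 'a set \<Rightarrow> bool" where
  "cotriangle V E T \<longleftrightarrow> T \<subseteq> V \<and> card T = 3 \<and> (\<forall>x\<in>T. \<forall>y\<in>T. \<not> E x y)"

definition adjacent_to_cotriangle :: "'a set \<Rightarrow> ('a \<Rightarrow> 'a \<Rightarrow> bool) \<Rightarrow> 'a set \<Rightarrow> 'a \<Rightarrow> bool" where
  "adjacent_to_cotriangle V E T x \<longleftrightarrow> x \<in> V \<and> card {t \<in> T. E x t} \<ge> 2"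

end

theory Submission
  imports Defs
begin

lemma extend_clique:
  assumes "finite V" "complete_set V R A"
  shows "\<exists>C. is_clique V R C \<and> A \<subseteq> C"
proof -
  let ?S = "{D. complete_set V R D \<and> A \<subseteq> D}"
  have fin: "finite ?S"
    by (rule finite_subset[of _ "Pow V"]) (auto simp: complete_set_def assms(1))
  have "A \<in> ?S" using assms(2) by auto
  from finite_has_maximal2[OF fin this] obtain C where
    C: "C \<in> ?S" "\<forall>x\<in>?S. C \<le> x \<longrightarrow> C = x" by blast
  have "is_clique V R C" unfolding is_clique_def using C by auto
  thus ?thesis using C by auto
qed

lemma two_two_inter:
  assumes "finite T" "card T = 3" "X \<subseteq> T" "Y \<subseteq> T" "card X \<ge> 2" "card Y \<ge> 2"
  shows "X \<inter> Y \<noteq> {}"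
proof
  assume "X \<inter> Y = {}"
  have fx: "finite X" "finite Y" using assms finite_subset by auto
  have "card (X \<union> Y) = card X + card Y" using card_Un_disjoint[OF fx \<open>X \<inter> Y = {}\<close>] .
  moreover have "card (X \<union> Y) \<le> card T" using assms by (intro card_mono) auto
  ultimately show False using assms by linarith
qed

theorem mainTheorem4:
  fixes V :: "'a set" and E :: "'a \<Rightarrow> 'a \<Rightarrow> bool" and k :: nat and T :: "'a set"
  assumes "simple_graph V E"
    and "regular V E k"
    and "helly_graph V (compl_edges V E)"
    and "cotriangle V E T"
  shows "card {x \<in> V. adjacent_to_cotriangle V E T x} \<ge> k"
proof -
  let ?H = "compl_edges V E"
  have finV: "finite V" and symE: "\<And>x y. E x y \<Longrightarrow> E y x" and irr: "\<And>x. \<not> E x x"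
    and inV: "\<And>x y. E x y \<Longrightarrow> x \<in> V \<and> y \<in> V"
    using assms(1) unfolding simple_graph_def by auto
  have TV: "T \<subseteq> V" and cT: "card T = 3" and indep: "\<forall>x\<in>T. \<forall>y\<in>T. \<not> E x y"
    using assms(4) unfolding cotriangle_def by auto
  have finT: "finite T" using cT by (metis card.infinite zero_neq_numeral)
  let ?F = "{C. is_clique V ?H C \<and> card (C \<inter> T) \<ge> 2}"
  obtain a b c where abc: "T = {a,b,c}" "a \<noteq> b" "b \<noteq> c" "a \<noteq> c"
    using cT card_3_iff by metis
  have pair: "\<exists>C. is_clique V ?H C \<and> {p,q,y} \<subseteq> C"
    if "p \<in> T" "q \<in> T" "p \<noteq> q" "y \<in> V" "\<not> E y p" "\<not> E y q" for p q y
  proof -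
    have "complete_set V ?H {p,q,y}"
      unfolding complete_set_def compl_edges_def
      using that TV indep symE by blast
    thus ?thesis using extend_clique[OF finV] by blast
  qed
  have cardC: "card (C \<inter> T) \<ge> 2" if "p \<in> C" "q \<in> C" "p \<in> T" "q \<in> T" "p \<noteq> q" for C p q
  proof -
    have "card {p,q} \<le> card (C \<inter> T)"
      using that finT by (intro card_mono) auto
    thus ?thesis using that by simp
  qed
  have "\<Inter>?F \<noteq> {}"
    using assms(3) unfolding helly_graph_def helly_family_def
  proof (elim allE impE)
    show "?F \<subseteq> {C. is_clique V ?H C}" by auto
    show "\<forall>A\<in>?F. \<forall>B\<in>?F. A \<inter> B \<noteq> {}"
    proof (intro ballI)
      fix A B assume "A \<in> ?F" "B \<in> ?F"
      hence "(A \<inter> T) \<inter> (B \<inter> T) \<noteq> {}"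
        by (intro two_two_inter[OF finT cT]) auto
      thus "A \<inter> B \<noteq> {}" by auto
    qed
  qed
  then obtain u where u: "\<And>C. C \<in> ?F \<Longrightarrow> u \<in> C" by blast
  have "a \<in> T" "b \<in> T" using abc by auto
  have "a \<in> V" using TV \<open>a \<in> T\<close> by auto
  then obtain C0 where C0: "is_clique V ?H C0" "{a,b,a} \<subseteq> C0"
    using pair[OF \<open>a \<in> T\<close> \<open>b \<in> T\<close> \<open>a \<noteq> b\<close> \<open>a \<in> V\<close>] indep \<open>a \<in> T\<close> \<open>b \<in> T\<close> by blast
  have "C0 \<in> ?F" using C0 cardC[of a C0 b] \<open>a \<in> T\<close> \<open>b \<in> T\<close> \<open>a \<noteq> b\<close> by auto
  hence "u \<in> C0" by (rule u)
  hence uV: "u \<in> V" using C0 unfolding is_clique_def complete_set_def by auto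
  have no: False if h: "p \<in> T" "q \<in> T" "p \<noteq> q" "\<not> E y p" "\<not> E y q" "E u y" for p q y
  proof -
    have yV: "y \<in> V" using inV that by auto
    obtain C where C: "is_clique V ?H C" "{p,q,y} \<subseteq> C" using pair[OF h(1-3) yV h(4,5)] by blast
    have "C \<in> ?F" using C cardC[of p C q] that by auto
    hence "u \<in> C" by (rule u)
    moreover have "u \<noteq> y" using irr that by auto
    ultimately have "?H u y" using C unfolding is_clique_def complete_set_def by auto
    thus False using that unfolding compl_edges_def by auto
  qed
  have sub: "neighbours V E u \<subseteq> {x \<in> V. adjacent_to_cotriangle V E T x}"
  proof
    fix y assume "y \<in> neighbours V E u"
    hence yV: "y \<in> V" and Euy: "E u y" unfolding neighbours_def by auto
    have "card {t \<in> T. E y t} \<ge> 2"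
    proof (rule ccontr)
      assume lt: "\<not> 2 \<le> card {t \<in> T. E y t}"
      have two: "card {p,q} \<le> card {t \<in> T. E y t}" if "p \<in> T" "q \<in> T" "E y p" "E y q" for p q
        using that finT by (intro card_mono) auto
      have "\<not> (E y a \<and> E y b)" using two[of a b] lt abc by auto
      moreover have "\<not> (E y a \<and> E y c)" using two[of a c] lt abc by auto
      moreover have "\<not> (E y b \<and> E y c)" using two[of b c] lt abc by auto
      ultimately show False
        using no[of a b y] no[of a c y] no[of b c y] abc Euy by auto
    qed
    thus "y \<in> {x \<in> V. adjacent_to_cotriangle V E T x}"
      using yV unfolding adjacent_to_cotriangle_def by auto
  qed
  have "k = card (neighbours V E u)" using assms(2) uV unfolding regular_def by auto
  also have "\<dots> \<le> card {x \<in> V. adjacent_to_cotriangle V E T x}"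
    using sub finV by (intro card_mono) auto
  finally show ?thesis .
qed

end
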